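(* Let $0<\lambda<1$, let $F$ be a distribution function with $F(x)=0$ for $x<0$, let $X$ be a random variable with distribution function $F$, and let $\phi(t)=\int_0^\infty e^{-tx}\,dF(x)$, $t\ge 0$, be its Laplace transform. Then $m_{1+\lambda}:=E[X^{1+\lambda}]=\int_0^\infty x^{1+\lambda}\,dF(x)$ is finite if and only if the right derivative $\phi'(0+)$ exists (finite) and the fractional derivative $$\Big[\frac{d^{1+\lambda}}{dt^{1+\lambda}}\phi(t)\Big|_{t=0+}\Big]:=\frac{\lambda}{\Gamma(1-\lambda)}\int_0^\infty \frac{\phi'(u)-\phi'(0+)}{u^{1+\lambda}}\,du$$ exists (is finite). In that case $$m_{1+\lambda}=\frac{\lambda}{\Gamma(1-\lambda)}\int_0^\infty \frac{\phi'(u)-\phi'(0+)}{u^{1+\lambda}}\,du.$$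
   Context: $\Gamma$ denotes the Gamma function. For $t\ge0$ the fractional derivative of order $1+\lambda$ of $\phi$ is defined as $\frac{\lambda}{\Gamma(1-\lambda)}\int_t^\infty \frac{\phi'(u)-\phi'(t)}{(u-t)^{1+\lambda}}\,du$. *)

theory Defs
  imports "HOL-Probability.Probability"
begin

definition laplace_tr :: "real measure \<Rightarrow> real \<Rightarrow> real" where
  "laplace_tr M t = (\<integral>x. exp (- t * x) \<partial>M)"

end

theory Submission imports Defs begin

lemma exp_int_0v:
  fixes v :: real assumes "0 \<le> v"
  shows "(\<integral>\<^sup>+s. ennreal (indicator {0..v} s * exp (-s)) \<partial>lborel) = ennreal (1 - exp (-v))"
proof -
  have "((\<lambda>s. exp (-s)) has_integral ((- exp (-v)) - (- exp (-0)))) {0..v}"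
    using assms
    by (intro fundamental_theorem_of_calculus)
       (auto intro!: derivative_eq_intros simp flip: has_real_derivative_iff_has_vector_derivative)
  then have "((\<lambda>s. exp (-s)) has_integral (1 - exp (-v))) {0..v}" by simp
  from nn_integral_has_integral_lebesgue[OF _ this] show ?thesis by simp
qed

lemma powr_int_inf:
  fixes s lam :: real assumes "0 < s" "0 < lam"
  shows "(\<integral>\<^sup>+v. ennreal (indicator {s..} v * v powr (-(1+lam))) \<partial>lborel) = ennreal (s powr (-lam) / lam)"
proof -
  have "((\<lambda>v. v powr (-(1+lam))) has_integral -(s powr (-(1+lam)+1)) / (-(1+lam)+1)) {s..}"
    using assms by (intro has_integral_powr_to_inf) auto
  then have "((\<lambda>v. v powr (-(1+lam))) has_integral (s powr (-lam) / lam)) {s..}" by simp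
  from nn_integral_has_integral_lebesgue[OF _ this] show ?thesis by simp
qed


lemma const_int:
  fixes lam :: real assumes lam: "0 < lam" "lam < 1"
  shows "(\<integral>\<^sup>+v. ennreal (indicator {0<..} v * ((1 - exp (-v)) / v powr (1+lam))) \<partial>lborel)
          = ennreal (Gamma (1-lam) / lam)"
proof -
  define H where "H v s = ennreal (indicator {0<..} v * v powr (-(1+lam)) * (indicator {0..v} s * exp(-s)))" for v s :: real
  have Hm: "case_prod H \<in> borel_measurable (lborel \<Otimes>\<^sub>M lborel)"
  proof -
    have "case_prod H = (\<lambda>x. ennreal ((if 0 < fst x then 1 else 0) * fst x powr (-(1+lam)) * ((if 0 \<le> snd x \<and> snd x \<le> fst x then 1 else 0) * exp(- snd x))))"
      unfolding H_def by (auto simp: fun_eq_iff indicator_def)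
    also have "\<dots> \<in> borel_measurable (lborel \<Otimes>\<^sub>M lborel)" by measurable
    finally show ?thesis .
  qed
  have 1: "ennreal (indicator {0<..} v * ((1 - exp (-v)) / v powr (1+lam))) = (\<integral>\<^sup>+s. H v s \<partial>lborel)" for v
  proof (cases "v > 0")
    case True
    have "(\<integral>\<^sup>+s. H v s \<partial>lborel) = (\<integral>\<^sup>+s. ennreal (v powr (-(1+lam))) * ennreal (indicator {0..v} s * exp(-s)) \<partial>lborel)"
      unfolding H_def using True by (intro nn_integral_cong) (simp add: ennreal_mult')
    also have "\<dots> = ennreal (v powr (-(1+lam))) * ennreal (1 - exp (-v))"
      using True by (subst nn_integral_cmult) (auto simp: exp_int_0v)
    also have "\<dots> = ennreal (indicator {0<..} v * ((1 - exp (-v)) / v powr (1+lam)))"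
    proof -
      have e: "v powr (-(1+lam)) = 1 / v powr (1+lam)" by (rule powr_minus_divide)
      show ?thesis using True unfolding e by (simp add: ennreal_mult'[symmetric])
    qed
    finally show ?thesis by simp
  next
    case False
    then show ?thesis unfolding H_def by simp
  qed
  have 2: "(\<integral>\<^sup>+v. H v s \<partial>lborel) = ennreal (indicator {0<..} s * s powr (-lam) / exp s / lam)" if "s \<noteq> 0" for s
  proof (cases "s > 0")
    case True
    have "(\<integral>\<^sup>+v. H v s \<partial>lborel) = (\<integral>\<^sup>+v. ennreal (exp (-s)) * ennreal (indicator {s..} v * v powr (-(1+lam))) \<partial>lborel)"
      unfolding H_def using True by (intro nn_integral_cong) (auto simp: ennreal_mult'[symmetric] indicator_def)
    also have "\<dots> = ennreal (exp (-s)) * ennreal (s powr (-lam) / lam)"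
      using True lam by (subst nn_integral_cmult) (auto simp del: minus_add_distrib simp: powr_int_inf)
    also have "\<dots> = ennreal (indicator {0<..} s * s powr (-lam) / exp s / lam)"
      using True lam by (simp add: ennreal_mult'[symmetric] exp_minus field_simps)
    finally show ?thesis .
  next
    case False
    with that have "s < 0" by simp
    then show ?thesis unfolding H_def by (simp add: indicator_def)
  qed
  have "(\<integral>\<^sup>+v. ennreal (indicator {0<..} v * ((1 - exp (-v)) / v powr (1+lam))) \<partial>lborel)
        = (\<integral>\<^sup>+v. \<integral>\<^sup>+s. H v s \<partial>lborel \<partial>lborel)" by (rule nn_integral_cong) (rule 1)
  also have "\<dots> = (\<integral>\<^sup>+s. \<integral>\<^sup>+v. H v s \<partial>lborel \<partial>lborel)"
    using lborel_pair.Fubini'[OF Hm] by simp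
  also have "\<dots> = (\<integral>\<^sup>+s. ennreal (indicator {0<..} s * s powr (-lam) / exp s / lam) \<partial>lborel)"
    using AE_lborel_singleton[of 0] by (intro nn_integral_cong_AE) (auto elim!: eventually_mono simp: 2)
  also have "\<dots> = (\<integral>\<^sup>+s. ennreal (1/lam) * ennreal (indicator {0..} s * s powr ((1-lam) - 1) / exp s) \<partial>lborel)"
    using lam by (intro nn_integral_cong) (auto simp: ennreal_mult'[symmetric] indicator_def)
  also have "\<dots> = ennreal (1/lam) * ennreal (Gamma (1-lam))"
    using lam by (subst nn_integral_cmult) (auto simp: Gamma_conv_nn_integral_real)
  also have "\<dots> = ennreal (Gamma (1-lam) / lam)"
    using lam by (simp add: ennreal_mult'[symmetric])
  finally show ?thesis .
qed


lemma scale_int: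
  fixes lam x :: real assumes lam: "0 < lam" "lam < 1" and x: "0 \<le> x"
  shows "(\<integral>\<^sup>+u. ennreal (indicator {0<..} u * (x * (1 - exp (- u * x)) / u powr (1+lam))) \<partial>lborel)
          = ennreal (x powr (1+lam)) * ennreal (Gamma (1-lam) / lam)"
proof (cases "x = 0")
  case True
  then show ?thesis by simp
next
  case False
  with x have x: "x > 0" by simp
  define f where "f u = ennreal (indicator {0<..} u * (x * (1 - exp (- u * x)) / u powr (1+lam)))" for u
  have fm: "f \<in> borel_measurable borel" unfolding f_def by measurable
  have "(\<integral>\<^sup>+u. f u \<partial>lborel) = ennreal \<bar>1/x\<bar> * (\<integral>\<^sup>+v. f (0 + 1/x * v) \<partial>lborel)"
    by (rule nn_integral_real_affine[OF fm]) (use x in simp)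
  also have "(\<integral>\<^sup>+v. f (0 + 1/x * v) \<partial>lborel) =
      (\<integral>\<^sup>+v. ennreal (x * x powr (1+lam)) * ennreal (indicator {0<..} v * ((1 - exp (-v)) / v powr (1+lam))) \<partial>lborel)"
  proof (rule nn_integral_cong)
    fix v :: real
    show "f (0 + 1/x * v) = ennreal (x * x powr (1+lam)) * ennreal (indicator {0<..} v * ((1 - exp (-v)) / v powr (1+lam)))"
    proof (cases "v > 0")
      case True
      have "(v/x) powr (1+lam) = v powr (1+lam) / x powr (1+lam)"
        using True x by (simp add: powr_divide)
      then show ?thesis using True x unfolding f_def
        by (simp add: ennreal_mult'[symmetric] field_simps)
    next
      case False
      then show ?thesis using x unfolding f_def by (simp add: indicator_def field_simps)
    qed
  qed
  also have "\<dots> = ennreal (x * x powr (1+lam)) * ennreal (Gamma (1-lam) / lam)"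
    using const_int[OF lam] by (subst nn_integral_cmult) auto
  finally have "(\<integral>\<^sup>+u. f u \<partial>lborel) = ennreal (1/x) * ennreal (x * x powr (1+lam)) * ennreal (Gamma (1-lam) / lam)"
    using x by (simp add: mult.assoc)
  also have "ennreal (1/x) * ennreal (x * x powr (1+lam)) = ennreal (x powr (1+lam))"
    using x by (simp add: ennreal_mult'[symmetric])
  finally show ?thesis unfolding f_def .
qed


lemma exp_diff_bound:
  fixes a b x :: real assumes "0 \<le> a" "0 \<le> b" "0 \<le> x"
  shows "\<bar>exp (- a * x) - exp (- b * x)\<bar> \<le> \<bar>a - b\<bar> * x"
proof -
  have *: "exp (- c * x) - exp (- d * x) \<le> (d - c) * x" if "c \<le> d" "0 \<le> c" for c d :: real
  proof -
    have "1 - (d - c) * x \<le> exp (- ((d - c) * x))" using exp_ge_add_one_self[of "- ((d - c) * x)"] by simp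
    hence "exp (- c * x) * (1 - exp (- ((d - c) * x))) \<le> exp (- c * x) * ((d - c) * x)"
      by (intro mult_left_mono) auto
    also have "\<dots> \<le> 1 * ((d - c) * x)"
      using that assms by (intro mult_right_mono) (auto simp: mult_nonneg_nonneg)
    also have "exp (- c * x) * (1 - exp (- ((d - c) * x))) = exp (- c * x) - exp (- d * x)"
      by (simp add: algebra_simps flip: exp_add)
    finally show ?thesis by simp
  qed
  have **: "exp (- d * x) \<le> exp (- c * x)" if "c \<le> d" for c d :: real
    using that assms by (simp add: mult_right_mono)
  show ?thesis
  proof (cases "a \<le> b")
    case True
    then show ?thesis using *[OF True assms(1)] **[OF True] by (simp add: abs_if)
  next
    case False
    then show ?thesis using *[of b a] **[of b a] assms by (simp add: abs_if)
  qed
qed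

context real_distribution
begin

lemma exp_integrable:
  assumes nonneg: "AE x in M. 0 \<le> x" and t: "0 \<le> t"
  shows "integrable M (\<lambda>x. exp (- t * x))"
proof (rule integrable_const_bound[where B=1])
  show "AE x in M. norm (exp (- t * x)) \<le> 1"
    using nonneg by eventually_elim (use t in \<open>auto simp: mult_nonneg_nonneg\<close>)
qed measurable

lemma laplace_deriv_within:
  assumes nonneg: "AE x in M. 0 \<le> x" and int1: "integrable M (\<lambda>x. x)" and t0: "0 \<le> t0"
  shows "(laplace_tr M has_real_derivative - (\<integral>x. x * exp (- t0 * x) \<partial>M)) (at t0 within {0..})"
  unfolding has_field_derivative_iff tendsto_at_iff_sequentially
proof (intro allI impI)
  fix X :: "nat \<Rightarrow> real"
  assume XS: "\<forall>i. X i \<in> {0..} - {t0}" and Xl: "X \<longlonglongrightarrow> t0"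
  define q where "q n x = (exp (- X n * x) - exp (- t0 * x)) / (X n - t0)" for n x
  have eq: "((\<lambda>y. (laplace_tr M y - laplace_tr M t0) / (y - t0)) \<circ> X) n = (\<integral>x. q n x \<partial>M)" for n
  proof -
    have "X n \<ge> 0" using XS by auto
    then show ?thesis
      using exp_integrable[OF nonneg \<open>X n \<ge> 0\<close>] exp_integrable[OF nonneg t0]
      unfolding q_def laplace_tr_def comp_def
      by (simp add: integral_diff)
  qed
  have "(\<lambda>n. \<integral>x. q n x \<partial>M) \<longlonglongrightarrow> (\<integral>x. - (x * exp (- t0 * x)) \<partial>M)"
  proof (rule integral_dominated_convergence[where w="\<lambda>x. x"])
    show "(\<lambda>x. - (x * exp (- t0 * x))) \<in> borel_measurable M" by measurable
    show "\<And>n. q n \<in> borel_measurable M" unfolding q_def by measurable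
    show "integrable M (\<lambda>x. x)" by fact
    show "AE x in M. (\<lambda>n. q n x) \<longlonglongrightarrow> - (x * exp (- t0 * x))"
    proof (rule AE_I2)
      fix x :: real
      have "((\<lambda>t. exp (- t * x)) has_real_derivative - (x * exp (- t0 * x))) (at t0)"
        by (auto intro!: derivative_eq_intros)
      hence "((\<lambda>y. (exp (- y * x) - exp (- t0 * x)) / (y - t0)) \<longlongrightarrow> - (x * exp (- t0 * x))) (at t0)"
        by (simp add: has_field_derivative_iff)
      hence "((\<lambda>y. (exp (- y * x) - exp (- t0 * x)) / (y - t0)) \<circ> X) \<longlonglongrightarrow> - (x * exp (- t0 * x))"
        using XS Xl unfolding tendsto_at_iff_sequentially by auto
      then show "(\<lambda>n. q n x) \<longlonglongrightarrow> - (x * exp (- t0 * x))" by (simp add: q_def comp_def)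
    qed
    show "AE x in M. norm (q n x) \<le> x" for n
      using nonneg
    proof eventually_elim
      case (elim x)
      have "X n \<ge> 0" "X n \<noteq> t0" using XS by auto
      then have "\<bar>exp (- X n * x) - exp (- t0 * x)\<bar> \<le> \<bar>X n - t0\<bar> * x"
        using exp_diff_bound[OF _ t0 elim] by auto
      then show ?case using \<open>X n \<noteq> t0\<close> by (simp add: q_def abs_divide field_simps)
    qed
  qed
  moreover have "((\<lambda>y. (laplace_tr M y - laplace_tr M t0) / (y - t0)) \<circ> X) = (\<lambda>n. \<integral>x. q n x \<partial>M)"
    using eq by (intro ext)
  ultimately show "((\<lambda>y. (laplace_tr M y - laplace_tr M t0) / (y - t0)) \<circ> X) \<longlonglongrightarrow> - (\<integral>x. x * exp (- t0 * x) \<partial>M)"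
    by simp
qed

end

context real_distribution
begin

lemma laplace_right_deriv:
  assumes nonneg: "AE x in M. 0 \<le> x" and int1: "integrable M (\<lambda>x. x)"
  shows "(laplace_tr M has_real_derivative - (\<integral>x. x \<partial>M)) (at_right 0)"
proof -
  have "(laplace_tr M has_real_derivative - (\<integral>x. x * exp (- 0 * x) \<partial>M)) (at 0 within {0..})"
    by (rule laplace_deriv_within[OF nonneg int1]) simp
  hence "(laplace_tr M has_real_derivative - (\<integral>x. x * exp (- 0 * x) \<partial>M)) (at 0 within {0<..})"
    by (rule DERIV_subset) auto
  then show ?thesis by simp
qed

lemma laplace_deriv_pos:
  assumes nonneg: "AE x in M. 0 \<le> x" and int1: "integrable M (\<lambda>x. x)" and t: "0 < t"
  shows "deriv (laplace_tr M) t = - (\<integral>x. x * exp (- t * x) \<partial>M)"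
proof -
  have "(laplace_tr M has_real_derivative - (\<integral>x. x * exp (- t * x) \<partial>M)) (at t within {0..})"
    by (rule laplace_deriv_within[OF nonneg int1]) (use t in simp)
  moreover have "at t within {0..} = at t"
    using t by (intro at_within_interior) (simp add: interior_real_atLeast)
  ultimately show ?thesis by (intro DERIV_imp_deriv) simp
qed

lemma laplace_right_deriv_imp:
  assumes nonneg: "AE x in M. 0 \<le> x"
    and D: "(laplace_tr M has_real_derivative d) (at_right 0)"
  shows "integrable M (\<lambda>x. x) \<and> d = - (\<integral>x. x \<partial>M)"
proof -
  define X where "X n = inverse (real (Suc n))" for n
  have Xpos: "X n > 0" for n unfolding X_def by simp
  have Xl: "X \<longlonglongrightarrow> 0" unfolding X_def by (rule LIMSEQ_inverse_real_of_nat)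
  have phi0: "laplace_tr M 0 = 1" unfolding laplace_tr_def using prob_space by (simp add: space_eq_univ)
  from D have "((\<lambda>y. (laplace_tr M y - laplace_tr M 0) / (y - 0)) \<circ> X) \<longlonglongrightarrow> d"
    unfolding has_field_derivative_iff tendsto_at_iff_sequentially using Xpos Xl by auto
  hence lim1: "(\<lambda>n. (laplace_tr M (X n) - 1) / X n) \<longlonglongrightarrow> d"
    by (simp add: comp_def phi0)
  define r where "r n x = (1 - exp (- X n * x)) / X n" for n x
  have rint: "integrable M (r n)" for n
  proof (rule integrable_const_bound[where B="1 / X n"])
    show "AE x in M. norm (r n x) \<le> 1 / X n"
      using nonneg
    proof eventually_elim
      case (elim x)
      have "exp (- X n * x) \<le> 1" using elim Xpos[of n] by (simp add: mult_nonneg_nonneg)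
      then show ?case using Xpos[of n] by (simp add: r_def abs_divide divide_right_mono)
    qed
  qed (unfold r_def, measurable)
  have rnn: "AE x in M. 0 \<le> r n x" for n
    using nonneg
  proof eventually_elim
    case (elim x)
    have "exp (- X n * x) \<le> 1" using elim Xpos[of n] by (simp add: mult_nonneg_nonneg)
    then show ?case using Xpos[of n] by (simp add: r_def)
  qed
  have p1: "prob UNIV = 1" using prob_space by simp
  have rI: "(\<integral>x. r n x \<partial>M) = - ((laplace_tr M (X n) - 1) / X n)" for n
    using exp_integrable[OF nonneg less_imp_le[OF Xpos[of n]]] p1
    unfolding r_def laplace_tr_def by (simp add: integral_diff prob_space diff_divide_distrib)
  have lim2: "(\<lambda>n. (\<integral>\<^sup>+x. ennreal (r n x) \<partial>M)) \<longlonglongrightarrow> ennreal (- d)"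
  proof -
    have "(\<lambda>n. (\<integral>x. r n x \<partial>M)) \<longlonglongrightarrow> - d" unfolding rI by (intro tendsto_intros lim1)
    hence "(\<lambda>n. ennreal (\<integral>x. r n x \<partial>M)) \<longlonglongrightarrow> ennreal (- d)" by (rule tendsto_ennrealI)
    moreover have "(\<integral>\<^sup>+x. ennreal (r n x) \<partial>M) = ennreal (\<integral>x. r n x \<partial>M)" for n
      by (rule nn_integral_eq_integral[OF rint rnn])
    ultimately show ?thesis by simp
  qed
  have rlim: "(\<lambda>n. r n x) \<longlonglongrightarrow> x" for x
  proof -
    have "((\<lambda>t. exp (- t * x)) has_real_derivative - (x * exp (- 0 * x))) (at 0)"
      by (auto intro!: derivative_eq_intros)
    hence "((\<lambda>y. (exp (- y * x) - exp (- 0 * x)) / (y - 0)) \<longlongrightarrow> - (x * exp (- 0 * x))) (at 0)"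
      by (simp add: has_field_derivative_iff)
    hence "((\<lambda>y. (exp (- y * x) - exp (- 0 * x)) / (y - 0)) \<circ> X) \<longlonglongrightarrow> - (x * exp (- 0 * x))"
      using Xpos Xl unfolding tendsto_at_iff_sequentially by (auto simp: less_imp_neq[symmetric])
    hence "(\<lambda>n. - ((exp (- X n * x) - 1) / X n)) \<longlonglongrightarrow> - (- x)"
      by (intro tendsto_minus) (simp add: comp_def)
    then show ?thesis by (simp add: r_def minus_divide_left)
  qed
  have "(\<integral>\<^sup>+x. ennreal x \<partial>M) = (\<integral>\<^sup>+x. liminf (\<lambda>n. ennreal (r n x)) \<partial>M)"
  proof (rule nn_integral_cong)
    fix x
    have "(\<lambda>n. ennreal (r n x)) \<longlonglongrightarrow> ennreal x" by (intro tendsto_ennrealI rlim)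
    then show "ennreal x = liminf (\<lambda>n. ennreal (r n x))" by (simp add: lim_imp_Liminf)
  qed
  also have "\<dots> \<le> liminf (\<lambda>n. (\<integral>\<^sup>+x. ennreal (r n x) \<partial>M))"
    by (rule nn_integral_liminf) (simp add: r_def)
  also have "\<dots> = ennreal (- d)" using lim2 by (simp add: lim_imp_Liminf)
  finally have fin: "(\<integral>\<^sup>+x. ennreal x \<partial>M) < \<infinity>"
    by (rule le_less_trans) simp
  have int1: "integrable M (\<lambda>x. x)"
  proof -
    have "(\<integral>\<^sup>+x. ennreal (norm x) \<partial>M) = (\<integral>\<^sup>+x. ennreal x \<partial>M)"
      using nonneg by (intro nn_integral_cong_AE) auto
    then show ?thesis using fin by (simp add: integrable_iff_bounded)
  qed
  have D2: "(laplace_tr M has_real_derivative - (\<integral>x. x \<partial>M)) (at_right 0)"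
    by (rule laplace_right_deriv[OF nonneg int1])
  have "d = - (\<integral>x. x \<partial>M)"
    using D D2 unfolding has_field_derivative_iff
    by (rule tendsto_unique[OF trivial_limit_at_right_real])
  with int1 show ?thesis by simp
qed

end

lemma exp_le1: "0 \<le> u \<Longrightarrow> 0 \<le> (x::real) \<Longrightarrow> exp (- (u * x)) \<le> 1"
  by (simp add: mult_nonneg_nonneg)

lemma xexp_le: "0 \<le> u \<Longrightarrow> 0 \<le> (x::real) \<Longrightarrow> x * exp (- (u * x)) \<le> x"
  using exp_le1[of u x] by (simp add: mult_left_le)

context real_distribution
begin

lemma tonelli_main:
  fixes lam :: real
  assumes nonneg: "AE x in M. 0 \<le> x" and int1: "integrable M (\<lambda>x. x)"
    and lam: "0 < lam" "lam < 1"
  defines "G \<equiv> \<lambda>u. indicator {0<..} u * ((deriv (laplace_tr M) u - - (\<integral>x. x \<partial>M)) / u powr (1+lam))"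
  shows "G \<in> borel_measurable lborel" "\<And>u. 0 \<le> G u"
    "(\<integral>\<^sup>+u. ennreal (G u) \<partial>lborel) = (\<integral>\<^sup>+x. ennreal (x powr (1+lam)) \<partial>M) * ennreal (Gamma (1-lam) / lam)"
proof -
  define f where "f u x = ennreal (indicator {0<..} u * (x * (1 - exp (- u * x)) / u powr (1+lam)))" for u x :: real
  have fm: "case_prod f \<in> borel_measurable (lborel \<Otimes>\<^sub>M M)" unfolding f_def by measurable
  have Gf: "ennreal (G u) = (\<integral>\<^sup>+x. f u x \<partial>M)" and Gnn: "0 \<le> G u" for u
  proof -
    have "ennreal (G u) = (\<integral>\<^sup>+x. f u x \<partial>M) \<and> 0 \<le> G u"
    proof (cases "u > 0")
      case True
      have i2: "integrable M (\<lambda>x. x * exp (- u * x))"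
        by (rule Bochner_Integration.integrable_bound[OF int1]) (use nonneg True in \<open>auto elim!: eventually_mono simp: xexp_le\<close>)
      have gi: "integrable M (\<lambda>x. x * (1 - exp (- u * x)) / u powr (1+lam))"
        using i2 int1 by (simp add: right_diff_distrib)
      have gnn: "AE x in M. 0 \<le> x * (1 - exp (- u * x)) / u powr (1+lam)"
        using nonneg True by (auto elim!: eventually_mono simp: exp_le1)
      have "deriv (laplace_tr M) u - - (\<integral>x. x \<partial>M) = (\<integral>x. x * (1 - exp (- u * x)) \<partial>M)"
        using laplace_deriv_pos[OF nonneg int1 True] i2 int1 by (simp add: right_diff_distrib integral_diff)
      hence Gu: "G u = (\<integral>x. x * (1 - exp (- u * x)) / u powr (1+lam) \<partial>M)"
        using True by (simp add: G_def)
      have "(\<integral>\<^sup>+x. f u x \<partial>M) = (\<integral>\<^sup>+x. ennreal (x * (1 - exp (- u * x)) / u powr (1+lam)) \<partial>M)"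
        unfolding f_def using True by simp
      also have "\<dots> = ennreal (G u)" unfolding Gu by (rule nn_integral_eq_integral[OF gi gnn])
      finally have "(\<integral>\<^sup>+x. f u x \<partial>M) = ennreal (G u)" .
      moreover have "0 \<le> G u" unfolding Gu using gnn by (rule integral_nonneg_AE)
      ultimately show ?thesis by simp
    next
      case False
      then show ?thesis by (simp add: G_def f_def)
    qed
    then show "ennreal (G u) = (\<integral>\<^sup>+x. f u x \<partial>M)" "0 \<le> G u" by auto
  qed
  show "0 \<le> G u" for u by (rule Gnn)
  have "(\<lambda>u. enn2real (\<integral>\<^sup>+x. f u x \<partial>M)) \<in> borel_measurable lborel"
    using fm by measurable
  moreover have "(\<lambda>u. enn2real (\<integral>\<^sup>+x. f u x \<partial>M)) = G"
    using Gf Gnn by (auto simp: fun_eq_iff simp flip: Gf)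
  ultimately show "G \<in> borel_measurable lborel" by simp
  interpret P: pair_sigma_finite lborel M by unfold_locales
  have "(\<integral>\<^sup>+u. ennreal (G u) \<partial>lborel) = (\<integral>\<^sup>+u. \<integral>\<^sup>+x. f u x \<partial>M \<partial>lborel)"
    by (intro nn_integral_cong Gf)
  also have "\<dots> = (\<integral>\<^sup>+x. \<integral>\<^sup>+u. f u x \<partial>lborel \<partial>M)"
    using P.Fubini'[OF fm] by simp
  also have "\<dots> = (\<integral>\<^sup>+x. ennreal (x powr (1+lam)) * ennreal (Gamma (1-lam) / lam) \<partial>M)"
    using nonneg by (intro nn_integral_cong_AE) (erule eventually_mono, unfold f_def, rule scale_int[OF lam])
  also have "\<dots> = (\<integral>\<^sup>+x. ennreal (x powr (1+lam)) \<partial>M) * ennreal (Gamma (1-lam) / lam)"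
    by (rule nn_integral_multc) measurable
  finally show "(\<integral>\<^sup>+u. ennreal (G u) \<partial>lborel) = (\<integral>\<^sup>+x. ennreal (x powr (1+lam)) \<partial>M) * ennreal (Gamma (1-lam) / lam)" .
qed

end

lemma x_le_powr: "0 \<le> (x::real) \<Longrightarrow> 0 < lam \<Longrightarrow> x \<le> 1 + x powr (1 + lam)"
proof -
  assume x: "0 \<le> x" and l: "0 < lam"
  show ?thesis
  proof (cases "x \<le> 1")
    case True
    then show ?thesis by (smt (verit) powr_ge_zero)
  next
    case False
    hence "x powr 1 \<le> x powr (1 + lam)" using l by (intro powr_mono) auto
    then show ?thesis using False by simp
  qed
qed

lemma x_le_powr_enn: "0 \<le> (x::real) \<Longrightarrow> 0 < lam \<Longrightarrow> ennreal x \<le> 1 + ennreal (x powr (1 + lam))"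
proof -
  assume "0 \<le> x" "0 < lam"
  hence "ennreal x \<le> ennreal (1 + x powr (1 + lam))" by (intro ennreal_leI x_le_powr)
  also have "\<dots> = 1 + ennreal (x powr (1 + lam))" by (simp add: ennreal_plus)
  finally show ?thesis .
qed

theorem lemma1p1:
  fixes M :: "real measure" and F :: "real \<Rightarrow> real" and lam :: real
  assumes "real_distribution M"
    and "F = cdf M"
    and "\<forall>x<0. F x = 0"
    and "0 < lam" and "lam < 1"
  shows "(((\<integral>\<^sup>+ x. ennreal (x powr (1 + lam)) \<partial>M) < \<infinity>) \<longleftrightarrow>
           (\<exists>d. (laplace_tr M has_real_derivative d) (at_right 0) \<and>
                set_integrable lborel {0<..}
                  (\<lambda>u. (deriv (laplace_tr M) u - d) / u powr (1 + lam)))) \<and>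
         (\<forall>d. (\<integral>\<^sup>+ x. ennreal (x powr (1 + lam)) \<partial>M) < \<infinity> \<longrightarrow>
           (laplace_tr M has_real_derivative d) (at_right 0) \<longrightarrow>
           (\<integral>x. x powr (1 + lam) \<partial>M) =
             lam / Gamma (1 - lam) *
               (LBINT u:{0<..}. (deriv (laplace_tr M) u - d) / u powr (1 + lam)))"
proof -
  interpret real_distribution M by fact
  have lam: "0 < lam" "lam < 1" by fact+
  have nonneg: "AE x in M. 0 \<le> x"
  proof -
    have "AE x in M. x \<notin> {..- inverse (real (Suc n))}" for n
    proof (rule AE_not_in)
      have "measure M {..- inverse (real (Suc n))} = 0"
        using assms(2,3) by (simp add: cdf_def)
      then show "{..- inverse (real (Suc n))} \<in> null_sets M"
        by (intro null_setsI) (auto simp: emeasure_eq_measure)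
    qed
    hence "AE x in M. \<forall>n. x \<notin> {..- inverse (real (Suc n))}" by (simp add: AE_all_countable)
    then show ?thesis
    proof eventually_elim
      case (elim x)
      show "0 \<le> x"
      proof (rule ccontr)
        assume "\<not> 0 \<le> x"
        then obtain n where "n > 0" "inverse (real n) < - x"
          using ex_inverse_of_nat_less[of "-x"] by auto
        then obtain m where "n = Suc m" by (cases n) auto
        have "x \<notin> {..- inverse (real (Suc m))}" using elim by blast
        hence "- inverse (real (Suc m)) < x" by simp
        moreover have "inverse (real (Suc m)) < - x" using \<open>inverse (real n) < - x\<close> \<open>n = Suc m\<close> by simp
        ultimately show False by linarith
      qed
    qed
  qed
  define P where "P = (\<integral>\<^sup>+ x. ennreal (x powr (1 + lam)) \<partial>M)"
  define C where "C = Gamma (1 - lam) / lam"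
  have Cpos: "C > 0" unfolding C_def using lam by simp
  have F1: "integrable M (\<lambda>x. x)" if "P < \<infinity>"
  proof -
    have "(\<integral>\<^sup>+x. ennreal (norm x) \<partial>M) \<le> (\<integral>\<^sup>+x. 1 + ennreal (x powr (1 + lam)) \<partial>M)"
      using nonneg by (intro nn_integral_mono_AE) (auto elim!: eventually_mono intro!: x_le_powr_enn lam)
    also have "\<dots> = 1 + P"
      unfolding P_def using emeasure_space_1 by (subst nn_integral_add) auto
    finally have "(\<integral>\<^sup>+x. ennreal (norm x) \<partial>M) < \<infinity>"
      using that by (simp add: le_less_trans ennreal_add_less_top)
    then show ?thesis by (simp add: integrable_iff_bounded)
  qed
  define G where "G = (\<lambda>u. indicator {0<..} u * ((deriv (laplace_tr M) u - - (\<integral>x. x \<partial>M)) / u powr (1+lam)))"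
  have T: "G \<in> borel_measurable lborel" "\<And>u. 0 \<le> G u" "(\<integral>\<^sup>+u. ennreal (G u) \<partial>lborel) = P * ennreal C"
    if "integrable M (\<lambda>x. x)"
    using tonelli_main[OF nonneg that lam] unfolding G_def P_def C_def by auto
  have Gset: "(\<lambda>u. indicator {0<..} u *\<^sub>R ((deriv (laplace_tr M) u - d) / u powr (1 + lam))) = G"
    if "d = - (\<integral>x. x \<partial>M)" for d
    unfolding G_def that by simp
  have part1: "P < \<infinity> \<longleftrightarrow> (\<exists>d. (laplace_tr M has_real_derivative d) (at_right 0) \<and>
                set_integrable lborel {0<..} (\<lambda>u. (deriv (laplace_tr M) u - d) / u powr (1 + lam)))"
  proof
    assume fin: "P < \<infinity>"
    note i1 = F1[OF fin]
    have "integrable lborel G"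
      unfolding integrable_iff_bounded
    proof
      show "G \<in> borel_measurable lborel" by (rule T(1)[OF i1])
      have "(\<integral>\<^sup>+u. ennreal (norm (G u)) \<partial>lborel) = P * ennreal C"
        using T(2)[OF i1] T(3)[OF i1] by simp
      also have "\<dots> < \<infinity>" using fin by (simp add: ennreal_mult_less_top)
      finally show "(\<integral>\<^sup>+u. ennreal (norm (G u)) \<partial>lborel) < \<infinity>" .
    qed
    then show "\<exists>d. (laplace_tr M has_real_derivative d) (at_right 0) \<and>
                set_integrable lborel {0<..} (\<lambda>u. (deriv (laplace_tr M) u - d) / u powr (1 + lam))"
    proof (intro exI[of _ "- (\<integral>x. x \<partial>M)"] conjI)
      show "(laplace_tr M has_real_derivative - (\<integral>x. x \<partial>M)) (at_right 0)"
        by (rule laplace_right_deriv[OF nonneg i1])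
      show "set_integrable lborel {0<..} (\<lambda>u. (deriv (laplace_tr M) u - - (\<integral>x. x \<partial>M)) / u powr (1 + lam))"
        unfolding set_integrable_def Gset[OF refl] by fact
    qed
  next
    assume "\<exists>d. (laplace_tr M has_real_derivative d) (at_right 0) \<and>
                set_integrable lborel {0<..} (\<lambda>u. (deriv (laplace_tr M) u - d) / u powr (1 + lam))"
    then obtain d where D: "(laplace_tr M has_real_derivative d) (at_right 0)"
      and SI: "set_integrable lborel {0<..} (\<lambda>u. (deriv (laplace_tr M) u - d) / u powr (1 + lam))" by blast
    from laplace_right_deriv_imp[OF nonneg D] have i1: "integrable M (\<lambda>x. x)" and d: "d = - (\<integral>x. x \<partial>M)" by auto
    from SI have "integrable lborel G" unfolding set_integrable_def Gset[OF d] .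
    hence "(\<integral>\<^sup>+u. ennreal (norm (G u)) \<partial>lborel) < \<infinity>" by (simp add: integrable_iff_bounded)
    hence "P * ennreal C < \<infinity>"
      using T(2)[OF i1] T(3)[OF i1] by simp
    then show "P < \<infinity>" using Cpos by (auto simp: ennreal_mult_less_top top.not_eq_extremum)
  qed
  have part2: "(\<integral>x. x powr (1 + lam) \<partial>M) = lam / Gamma (1 - lam) *
               (LBINT u:{0<..}. (deriv (laplace_tr M) u - d) / u powr (1 + lam))"
    if fin: "P < \<infinity>" and D: "(laplace_tr M has_real_derivative d) (at_right 0)" for d
  proof -
    from laplace_right_deriv_imp[OF nonneg D] have i1: "integrable M (\<lambda>x. x)" and d: "d = - (\<integral>x. x \<partial>M)" by auto
    have "(LBINT u:{0<..}. (deriv (laplace_tr M) u - d) / u powr (1 + lam)) = (\<integral>u. G u \<partial>lborel)"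
      unfolding set_lebesgue_integral_def Gset[OF d] ..
    also have "\<dots> = enn2real (\<integral>\<^sup>+u. ennreal (G u) \<partial>lborel)"
      using T(1)[OF i1] T(2)[OF i1] by (intro integral_eq_nn_integral) auto
    also have "\<dots> = enn2real P * C"
      using T(3)[OF i1] Cpos by (simp add: enn2real_mult)
    finally have L: "(LBINT u:{0<..}. (deriv (laplace_tr M) u - d) / u powr (1 + lam)) = enn2real P * C" .
    have "(\<integral>x. x powr (1 + lam) \<partial>M) = enn2real P"
      unfolding P_def by (intro integral_eq_nn_integral) auto
    moreover have g0: "Gamma (1 - lam) > 0" by (rule Gamma_real_pos) (use lam in simp)
    hence g: "Gamma (1 - lam) \<noteq> 0" by linarith
    ultimately show ?thesis unfolding L C_def using lam g by (simp add: field_simps)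
  qed
  show ?thesis using part1 part2 unfolding P_def by blast
qed

end
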